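(* Consider, under stochastic mass-action kinetics, the reaction networks W3: $S_1\underset{\beta}{\overset{\alpha}{\rightleftharpoons}}S_2$, $2S_1\underset{\lambda_2}{\overset{\lambda_1}{\rightleftharpoons}}2S_2$, and W4: $2S_1\underset{\lambda_5}{\overset{\lambda_3}{\rightleftharpoons}}S_1+S_2$, $2S_1\underset{\lambda_2}{\overset{\lambda_1}{\rightleftharpoons}}2S_2$. For each of them and every positive rate vector $\kappa$, $(\mathcal{G},\kappa)$ has product-form stationary distribution if and only if $(\mathcal{G},\kappa)$ is complex balanced.
   Context: Stochastic mass-action kinetics: reaction $\nu\to\nu'$ with rate $\kappa$ moves state $x\in\mathbb{Z}^2_{\ge0}$ to $x+\nu'-\nu$ with intensity $\kappa\frac{x!}{(x-\nu)!}\mathbf{1}_{x\ge\nu}$, $z!=z_1!z_2!$. $(\mathcal{G},\kappa)$ has product-form stationary distribution if there are $f_1,f_2:\mathbb{Z}_{\ge0}\to\mathbb{R}_{>0}$ such that on every positive recurrent irreducible component $\Gamma$ (nonempty set closed under reachability with every state reachable from every other) the stationary distribution is $\pi_\Gamma(x)=Z_\Gamma^{-1}f_1(x_1)f_2(x_2)$. $(\mathcal{G},\kappa)$ is complex balanced if there is $c\in\mathbb{R}^2_{>0}$ such that for every complex $\eta$, $\sum_{\nu\to\eta}\kappa_{\nu\to\eta}c^\nu=\sum_{\eta\to\nu'}\kappa_{\eta\to\nu'}c^\eta$. *)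

theory Defs
  imports "HOL-Analysis.Analysis"
begin

text \<open>States and complexes live in Z^2_{>=0}, rendered as nat * nat.
  A reaction is a pair (source complex nu, product complex nu').\<close>

type_synonym state = "nat \<times> nat"
type_synonym reaction = "state \<times> state"

definition cle :: "state \<Rightarrow> state \<Rightarrow> bool" where
  "cle \<nu> x \<longleftrightarrow> fst \<nu> \<le> fst x \<and> snd \<nu> \<le> snd x"

text \<open>x + nu' - nu (only used when nu <= x)\<close>
definition fire :: "reaction \<Rightarrow> state \<Rightarrow> state" where
  "fire r x = (fst x - fst (fst r) + fst (snd r), snd x - snd (fst r) + snd (snd r))"

definition intensity :: "(reaction \<Rightarrow> real) \<Rightarrow> reaction \<Rightarrow> state \<Rightarrow> real" where
  "intensity \<kappa> r x =
     (if cle (fst r) x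
      then \<kappa> r * (fact (fst x) / fact (fst x - fst (fst r)))
                 * (fact (snd x) / fact (snd x - snd (fst r)))
      else 0)"

definition step :: "reaction set \<Rightarrow> (reaction \<Rightarrow> real) \<Rightarrow> state \<Rightarrow> state \<Rightarrow> bool" where
  "step R \<kappa> x y \<longleftrightarrow> (\<exists>r\<in>R. intensity \<kappa> r x > 0 \<and> y = fire r x)"

definition reach :: "reaction set \<Rightarrow> (reaction \<Rightarrow> real) \<Rightarrow> state \<Rightarrow> state \<Rightarrow> bool" where
  "reach R \<kappa> = (step R \<kappa>)\<^sup>*\<^sup>*"

definition irreducible_component :: "reaction set \<Rightarrow> (reaction \<Rightarrow> real) \<Rightarrow> state set \<Rightarrow> bool" where
  "irreducible_component R \<kappa> \<Gamma> \<longleftrightarrow>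
     \<Gamma> \<noteq> {} \<and>
     (\<forall>x\<in>\<Gamma>. \<forall>y. reach R \<kappa> x y \<longrightarrow> y \<in> \<Gamma>) \<and>
     (\<forall>x\<in>\<Gamma>. \<forall>y\<in>\<Gamma>. reach R \<kappa> x y)"

text \<open>The inflow into y is the finite sum
  over reactions r whose firing from the state y - nu' + nu lands in y.\<close>
definition stationary :: "reaction set \<Rightarrow> (reaction \<Rightarrow> real) \<Rightarrow> state set \<Rightarrow> (state \<Rightarrow> real) \<Rightarrow> bool" where
  "stationary R \<kappa> \<Gamma> \<pi> \<longleftrightarrow>
     (\<forall>x. \<pi> x \<ge> 0) \<and> (\<forall>x. x \<notin> \<Gamma> \<longrightarrow> \<pi> x = 0) \<and> (\<pi> has_sum 1) \<Gamma> \<and>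
     (\<forall>y\<in>\<Gamma>. \<pi> y * (\<Sum>r\<in>R. intensity \<kappa> r y) =
        (\<Sum>r\<in>R. if cle (snd r) y
                  then (let x = (fst y - fst (snd r) + fst (fst r), snd y - snd (snd r) + snd (fst r))
                        in \<pi> x * intensity \<kappa> r x)
                  else 0))"

definition pos_rec_component :: "reaction set \<Rightarrow> (reaction \<Rightarrow> real) \<Rightarrow> state set \<Rightarrow> bool" where
  "pos_rec_component R \<kappa> \<Gamma> \<longleftrightarrow>
     irreducible_component R \<kappa> \<Gamma> \<and> (\<exists>\<pi>. stationary R \<kappa> \<Gamma> \<pi>)"

definition product_form :: "reaction set \<Rightarrow> (reaction \<Rightarrow> real) \<Rightarrow> bool" where
  "product_form R \<kappa> \<longleftrightarrow>
     (\<exists>f1 f2 :: nat \<Rightarrow> real. (\<forall>n. f1 n > 0) \<and> (\<forall>n. f2 n > 0) \<and>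
        (\<forall>\<Gamma>. pos_rec_component R \<kappa> \<Gamma> \<longrightarrow>
           (\<exists>Z > 0. \<forall>\<pi>. stationary R \<kappa> \<Gamma> \<pi> \<longrightarrow>
               (\<forall>x\<in>\<Gamma>. \<pi> x = f1 (fst x) * f2 (snd x) / Z))))"

definition complexes :: "reaction set \<Rightarrow> state set" where
  "complexes R = fst ` R \<union> snd ` R"

definition cpow :: "real \<times> real \<Rightarrow> state \<Rightarrow> real" where
  "cpow c \<nu> = fst c ^ fst \<nu> * snd c ^ snd \<nu>"

definition complex_balanced :: "reaction set \<Rightarrow> (reaction \<Rightarrow> real) \<Rightarrow> bool" where
  "complex_balanced R \<kappa> \<longleftrightarrow>
     (\<exists>c. fst c > 0 \<and> snd c > 0 \<and>
        (\<forall>\<eta>\<in>complexes R.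
           (\<Sum>r\<in>{r\<in>R. snd r = \<eta>}. \<kappa> r * cpow c (fst r)) =
           (\<Sum>r\<in>{r\<in>R. fst r = \<eta>}. \<kappa> r * cpow c \<eta>)))"

text \<open>W3: S1 <=> S2 (alpha, beta), 2S1 <=> 2S2 (lambda1, lambda2).\<close>
definition W3 :: "reaction set" where
  "W3 = {((1,0),(0,1)), ((0,1),(1,0)), ((2,0),(0,2)), ((0,2),(2,0))}"

text \<open>W4: 2S1 <=> S1+S2 (lambda3, lambda5), 2S1 <=> 2S2 (lambda1, lambda2).\<close>
definition W4 :: "reaction set" where
  "W4 = {((2,0),(1,1)), ((1,1),(2,0)), ((2,0),(0,2)), ((0,2),(2,0))}"

end

theory Submission
  imports Defs
begin


lemma intensity_nonneg: "\<kappa> r \<ge> 0 \<Longrightarrow> intensity \<kappa> r x \<ge> 0"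
  unfolding intensity_def by (auto intro!: mult_nonneg_nonneg divide_nonneg_nonneg)

lemma intensity_pos: "\<kappa> r > 0 \<Longrightarrow> cle (fst r) x \<Longrightarrow> intensity \<kappa> r x > 0"
  unfolding intensity_def by (auto intro!: mult_pos_pos divide_pos_pos)

lemma intensity_pos_cle: "intensity \<kappa> r x > 0 \<Longrightarrow> cle (fst r) x"
  unfolding intensity_def by (auto split: if_splits)

lemma step_intro: "r \<in> R \<Longrightarrow> \<kappa> r > 0 \<Longrightarrow> cle (fst r) x \<Longrightarrow> y = fire r x \<Longrightarrow> step R \<kappa> x y"
  unfolding step_def using intensity_pos by blast

definition conservative :: "reaction set \<Rightarrow> bool" where
  "conservative R \<longleftrightarrow> (\<forall>r\<in>R. fst (fst r) + snd (fst r) = fst (snd r) + snd (snd r))"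

lemma step_cons: "conservative R \<Longrightarrow> step R \<kappa> x y \<Longrightarrow> fst y + snd y = fst x + snd x"
  unfolding step_def conservative_def
  by (auto dest!: intensity_pos_cle simp: fire_def cle_def)

lemma reach_cons: assumes "conservative R" "reach R \<kappa> x y" shows "fst y + snd y = fst x + snd x"
  using assms(2) unfolding reach_def
  by (induction rule: rtranclp_induct) (auto dest: step_cons[OF assms(1)])

lemma step_rev:
  assumes sw: "\<forall>r\<in>R. prod.swap r \<in> R" and kp: "\<forall>r\<in>R. \<kappa> r > 0" and st: "step R \<kappa> x y"
  shows "step R \<kappa> y x"
proof -
  obtain r where r: "r \<in> R" "intensity \<kappa> r x > 0" "y = fire r x" using st unfolding step_def by blast
  have c: "cle (fst r) x" using intensity_pos_cle r(2) .
  show ?thesis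
  proof (rule step_intro[of "prod.swap r"])
    show "prod.swap r \<in> R" using sw r by auto
    show "\<kappa> (prod.swap r) > 0" using kp sw r by auto
    show "cle (fst (prod.swap r)) y" using c r(3) by (cases r) (auto simp: cle_def fire_def)
    show "x = fire (prod.swap r) y" using c r(3) by (cases r) (auto simp: cle_def fire_def)
  qed
qed

lemma reach_sym:
  assumes sw: "\<forall>r\<in>R. prod.swap r \<in> R" and kp: "\<forall>r\<in>R. \<kappa> r > 0" and "reach R \<kappa> x y"
  shows "reach R \<kappa> y x"
  using assms(3) unfolding reach_def
proof (induction rule: rtranclp_induct)
  case base then show ?case by simp
next
  case (step y z)
  have "step R \<kappa> z y" using step_rev[OF sw kp step(2)] .
  then show ?case using step(3) by (rule converse_rtranclp_into_rtranclp)
qed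

lemma irreducible_hub:
  assumes sw: "\<forall>r\<in>R. prod.swap r \<in> R" and kp: "\<forall>r\<in>R. \<kappa> r > 0" and cons: "conservative R"
    and hub: "\<forall>x. fst x + snd x = N \<longrightarrow> reach R \<kappa> x (N, 0)"
  shows "irreducible_component R \<kappa> {x. fst x + snd x = N}"
  unfolding irreducible_component_def
proof (intro conjI ballI allI impI)
  have "(N,0) \<in> {x. fst x + snd x = N}" by simp
  then show "{x. fst x + snd x = N} \<noteq> {}" by blast
next
  fix x y assume "x \<in> {x. fst x + snd x = N}" "reach R \<kappa> x y"
  then show "y \<in> {x. fst x + snd x = N}" using reach_cons[OF cons] by auto
next
  fix x y assume x: "x \<in> {x. fst x + snd x = N}" and y: "y \<in> {x. fst x + snd x = N}"
  have "reach R \<kappa> x (N,0)" using hub[rule_format, of x] x by simp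
  moreover have "reach R \<kappa> (N,0) y" using hub[rule_format, of y] y reach_sym[OF sw kp] by simp
  ultimately show "reach R \<kappa> x y" unfolding reach_def by (rule rtranclp_trans)
qed

lemma finite_level: "finite {x::state. fst x + snd x = N}"
proof -
  have "{x::state. fst x + snd x = N} \<subseteq> {0..N} \<times> {0..N}" by auto
  then show ?thesis by (rule finite_subset) auto
qed

lemma irr_finite:
  assumes cons: "conservative R" and irr: "irreducible_component R \<kappa> \<Gamma>"
  shows "finite \<Gamma>"
proof -
  have "\<Gamma> \<noteq> {}" using irr unfolding irreducible_component_def by blast
  then obtain x0 where x0: "x0 \<in> \<Gamma>" by blast
  have "\<Gamma> \<subseteq> {x. fst x + snd x = fst x0 + snd x0}"
  proof
    fix y assume y: "y \<in> \<Gamma>"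
    have "\<forall>x\<in>\<Gamma>. \<forall>y\<in>\<Gamma>. reach R \<kappa> x y" using irr unfolding irreducible_component_def by blast
    then have "reach R \<kappa> x0 y" using x0 y by blast
    then have "fst y + snd y = fst x0 + snd x0" by (rule reach_cons[OF cons])
    then show "y \<in> {x. fst x + snd x = fst x0 + snd x0}" by simp
  qed
  then show ?thesis using finite_level finite_subset by blast
qed

lemma sum_swap:
  assumes "\<forall>r\<in>R. prod.swap r \<in> R"
  shows "(\<Sum>r\<in>R. F r) = (\<Sum>r\<in>R. F (prod.swap r))"
  by (rule sum.reindex_bij_witness[of _ prod.swap prod.swap]) (use assms in auto)

lemma unique_stat:
  fixes \<mu> :: "state \<Rightarrow> real"
  assumes sw: "\<forall>r\<in>R. prod.swap r \<in> R" and kp: "\<forall>r\<in>R. \<kappa> r > 0"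
    and mup: "\<forall>x. \<mu> x > 0" and fin: "finite R"
    and db: "\<forall>r\<in>R. \<forall>y. cle (fst r) y \<longrightarrow>
               \<mu> y * intensity \<kappa> r y = \<mu> (fire r y) * intensity \<kappa> (prod.swap r) (fire r y)"
    and irr: "irreducible_component R \<kappa> \<Gamma>" and finG: "finite \<Gamma>" and st: "stationary R \<kappa> \<Gamma> \<pi>"
  shows "\<forall>x\<in>\<Gamma>. \<pi> x = \<mu> x / sum \<mu> \<Gamma>"
proof -
  define h where "h x = \<pi> x / \<mu> x" for x
  have pih: "\<pi> x = h x * \<mu> x" for x
  proof -
    have "\<mu> x \<noteq> 0" using mup by (metis less_irrefl)
    then show ?thesis by (simp add: h_def)
  qed
  have ne: "\<Gamma> \<noteq> {}" using irr unfolding irreducible_component_def by blast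
  have closed: "\<And>x y. x \<in> \<Gamma> \<Longrightarrow> reach R \<kappa> x y \<Longrightarrow> y \<in> \<Gamma>"
    using irr unfolding irreducible_component_def by blast
  define M where "M = Max (h ` \<Gamma>)"
  have Mge: "h x \<le> M" if "x \<in> \<Gamma>" for x
    unfolding M_def by (rule Max_ge[OF finite_imageI[OF finG] imageI[OF that]])
  have "M \<in> h ` \<Gamma>" unfolding M_def using finG ne by (intro Max_in) auto
  then obtain y0 where y0: "y0 \<in> \<Gamma>" "h y0 = M" by blast
  have intnn: "\<And>r x. r \<in> R \<Longrightarrow> intensity \<kappa> r x \<ge> 0"
    using kp intensity_nonneg less_imp_le by blast
  have stb: "\<forall>y\<in>\<Gamma>. \<pi> y * (\<Sum>r\<in>R. intensity \<kappa> r y) =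
        (\<Sum>r\<in>R. if cle (snd r) y
                  then (let x = (fst y - fst (snd r) + fst (fst r), snd y - snd (snd r) + snd (fst r))
                        in \<pi> x * intensity \<kappa> r x)
                  else 0)"
    using st unfolding stationary_def by (rule conjunct2[OF conjunct2[OF conjunct2]])
  have key: "h (fire r y) = M" if y: "y \<in> \<Gamma>" "h y = M" and r: "r \<in> R" "intensity \<kappa> r y > 0" for y r
  proof -
    have bal: "\<pi> y * (\<Sum>r\<in>R. intensity \<kappa> r y) =
        (\<Sum>r\<in>R. if cle (snd r) y
                  then (let x = (fst y - fst (snd r) + fst (fst r), snd y - snd (snd r) + snd (fst r))
                        in \<pi> x * intensity \<kappa> r x)
                  else 0)" using stb y(1) by (rule bspec)
    also have "\<dots> = (\<Sum>r\<in>R. if cle (fst r) y then \<pi> (fire r y) * intensity \<kappa> (prod.swap r) (fire r y) else 0)"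
      apply (subst sum_swap[OF sw])
      apply (rule sum.cong[OF refl])
      subgoal for r by (cases r) (auto simp: fire_def Let_def)
      done
    also have "\<dots> = (\<Sum>r\<in>R. h (fire r y) * (\<mu> y * intensity \<kappa> r y))"
    proof (rule sum.cong[OF refl])
      fix r assume r: "r \<in> R"
      show "(if cle (fst r) y then \<pi> (fire r y) * intensity \<kappa> (prod.swap r) (fire r y) else 0) =
            h (fire r y) * (\<mu> y * intensity \<kappa> r y)"
      proof (cases "cle (fst r) y")
        case True
        have "\<mu> y * intensity \<kappa> r y = \<mu> (fire r y) * intensity \<kappa> (prod.swap r) (fire r y)"
          using db r True by blast
        then show ?thesis using True by (simp add: pih mult.assoc)
      next
        case False
        then show ?thesis by (simp add: intensity_def)
      qed
    qed
    finally have e1: "\<pi> y * (\<Sum>r\<in>R. intensity \<kappa> r y) = (\<Sum>r\<in>R. h (fire r y) * (\<mu> y * intensity \<kappa> r y))" .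
    have e2: "\<pi> y * (\<Sum>r\<in>R. intensity \<kappa> r y) = (\<Sum>r\<in>R. h y * (\<mu> y * intensity \<kappa> r y))"
      unfolding pih[of y] sum_distrib_left by (simp add: mult.assoc)
    have "(\<Sum>r\<in>R. (h y - h (fire r y)) * (\<mu> y * intensity \<kappa> r y)) =
          (\<Sum>r\<in>R. h y * (\<mu> y * intensity \<kappa> r y)) - (\<Sum>r\<in>R. h (fire r y) * (\<mu> y * intensity \<kappa> r y))"
      unfolding left_diff_distrib sum_subtractf ..
    then have sum0: "(\<Sum>r\<in>R. (h y - h (fire r y)) * (\<mu> y * intensity \<kappa> r y)) = 0"
      using e1 e2 by simp
    moreover have nn: "\<forall>r\<in>R. (h y - h (fire r y)) * (\<mu> y * intensity \<kappa> r y) \<ge> 0"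
    proof
      fix r assume r: "r \<in> R"
      show "(h y - h (fire r y)) * (\<mu> y * intensity \<kappa> r y) \<ge> 0"
      proof (cases "intensity \<kappa> r y > 0")
        case True
        then have "step R \<kappa> y (fire r y)" using r unfolding step_def by auto
        then have "reach R \<kappa> y (fire r y)" unfolding reach_def by (rule r_into_rtranclp)
        then have "fire r y \<in> \<Gamma>" using closed y(1) by blast
        then have "h (fire r y) \<le> h y" using Mge y by auto
        then have d: "h y - h (fire r y) \<ge> 0" by simp
        have "\<mu> y > 0" using mup by blast
        then have "0 \<le> \<mu> y * intensity \<kappa> r y" using True by simp
        with d show ?thesis by (rule mult_nonneg_nonneg)
      next
        case False
        moreover have "intensity \<kappa> r y \<ge> 0" using intnn[OF r] .
        ultimately have "intensity \<kappa> r y = 0" by linarith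
        then show ?thesis by simp
      qed
    qed
    have all0: "\<forall>r'\<in>R. (h y - h (fire r' y)) * (\<mu> y * intensity \<kappa> r' y) = 0"
      using iffD1[OF sum_nonneg_eq_0_iff[OF fin nn[rule_format]] sum0] .
    then have "(h y - h (fire r y)) * (\<mu> y * intensity \<kappa> r y) = 0" using r(1) by (rule bspec)
    moreover have "\<mu> y > 0" using mup by blast
    ultimately show ?thesis using r(2) y(2) by simp
  qed
  have reachM: "h z = M \<and> z \<in> \<Gamma>" if "reach R \<kappa> y0 z" for z
    using that unfolding reach_def
  proof (induction rule: rtranclp_induct)
    case base then show ?case using y0 by simp
  next
    case (step z z')
    obtain r where r: "r \<in> R" "intensity \<kappa> r z > 0" "z' = fire r z" using step(2) unfolding step_def by blast
    have "h z' = M" using key[of z r] step(3) r by simp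
    moreover have "reach R \<kappa> y0 z'" using step(1,2) unfolding reach_def by (rule rtranclp.rtrancl_into_rtrancl)
    then have "z' \<in> \<Gamma>" using closed[OF y0(1)] by blast
    ultimately show ?case by (rule conjI)
  qed
  have hM: "h x = M" if x: "x \<in> \<Gamma>" for x
  proof -
    have "reach R \<kappa> y0 x" using irr y0(1) x unfolding irreducible_component_def by blast
    then show ?thesis using reachM by blast
  qed
  have "(\<pi> has_sum 1) \<Gamma>" using st unfolding stationary_def by (rule conjunct1[OF conjunct2[OF conjunct2]])
  then have "1 = sum \<pi> \<Gamma>" using has_sum_finite_iff[OF finG] by blast
  also have "\<dots> = (\<Sum>x\<in>\<Gamma>. M * \<mu> x)"
  proof (rule sum.cong[OF refl])
    fix x assume x: "x \<in> \<Gamma>"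
    show "\<pi> x = M * \<mu> x" unfolding pih[of x] hM[OF x] by (rule refl)
  qed
  also have "\<dots> = M * sum \<mu> \<Gamma>" by (rule sum_distrib_left[symmetric])
  finally have M1: "M * sum \<mu> \<Gamma> = 1" by (rule sym)
  have sp: "sum \<mu> \<Gamma> > 0" using finG ne mup by (intro sum_pos) auto
  then have Mv: "M = 1 / sum \<mu> \<Gamma>" using M1 by (simp add: eq_divide_eq)
  show ?thesis
  proof (intro ballI)
    fix x assume x: "x \<in> \<Gamma>"
    have "\<pi> x = M * \<mu> x" unfolding pih[of x] hM[OF x] by (rule refl)
    then show "\<pi> x = \<mu> x / sum \<mu> \<Gamma>" using Mv by simp
  qed
qed



definition mu :: "real \<times> real \<Rightarrow> state \<Rightarrow> real" where
  "mu c x = fst c ^ fst x / fact (fst x) * (snd c ^ snd x / fact (snd x))"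

lemma mu_int:
  assumes "cle (fst r) y"
  shows "mu c y * intensity \<kappa> r y =
    \<kappa> r * (fst c ^ fst y * snd c ^ snd y) / (fact (fst y - fst (fst r)) * fact (snd y - snd (fst r)))"
  using assms by (simp add: mu_def intensity_def field_simps)

lemma mu_db:
  assumes pair: "\<kappa> r * cpow c (fst r) = \<kappa> (prod.swap r) * cpow c (snd r)"
    and cl: "cle (fst r) y"
  shows "mu c y * intensity \<kappa> r y = mu c (fire r y) * intensity \<kappa> (prod.swap r) (fire r y)"
proof -
  obtain n1 n2 m1 m2 where r: "r = ((n1,n2),(m1,m2))" by (cases r) auto
  obtain y1 y2 where y: "y = (y1,y2)" by (cases y) auto
  from cl obtain d1 d2 where d: "y1 = n1 + d1" "y2 = n2 + d2"
    unfolding r y cle_def by (auto simp: le_iff_add)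
  have fr: "fire r y = (d1 + m1, d2 + m2)" unfolding fire_def r y d by simp
  have cl2: "cle (fst (prod.swap r)) (fire r y)" by (simp only: fr) (simp add: r cle_def)
  have L: "mu c y * intensity \<kappa> r y = \<kappa> r * (fst c ^ (n1 + d1) * snd c ^ (n2 + d2)) / (fact d1 * fact d2)"
    using mu_int[OF cl, of c \<kappa>] unfolding r y d by simp
  have R: "mu c (fire r y) * intensity \<kappa> (prod.swap r) (fire r y) =
      \<kappa> (prod.swap r) * (fst c ^ (d1 + m1) * snd c ^ (d2 + m2)) / (fact d1 * fact d2)"
    using mu_int[OF cl2, of c \<kappa>] by (simp only: fr) (simp add: r)
  have p: "\<kappa> r * (fst c ^ n1 * snd c ^ n2) = \<kappa> (prod.swap r) * (fst c ^ m1 * snd c ^ m2)"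
    using pair unfolding r cpow_def by simp
  have "\<kappa> r * (fst c ^ (n1 + d1) * snd c ^ (n2 + d2)) =
        (\<kappa> r * (fst c ^ n1 * snd c ^ n2)) * (fst c ^ d1 * snd c ^ d2)"
    by (simp add: power_add mult_ac)
  also have "\<dots> = (\<kappa> (prod.swap r) * (fst c ^ m1 * snd c ^ m2)) * (fst c ^ d1 * snd c ^ d2)"
    using p by simp
  also have "\<dots> = \<kappa> (prod.swap r) * (fst c ^ (d1 + m1) * snd c ^ (d2 + m2))"
    by (simp add: power_add mult_ac)
  finally show ?thesis using L R by simp
qed

lemma cb_pf:
  assumes fin: "finite R" and sw: "\<forall>r\<in>R. prod.swap r \<in> R" and kp: "\<forall>r\<in>R. \<kappa> r > 0"
    and cons: "conservative R" and c: "fst c > 0" "snd c > 0"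
    and pair: "\<forall>r\<in>R. \<kappa> r * cpow c (fst r) = \<kappa> (prod.swap r) * cpow c (snd r)"
  shows "product_form R \<kappa>"
proof -
  define f1 where "f1 n = fst c ^ n / fact n" for n
  define f2 where "f2 n = snd c ^ n / fact n" for n
  show ?thesis
  unfolding product_form_def
proof (rule exI[of _ f1], rule exI[of _ f2], intro conjI allI impI)
  show "f1 n > 0" for n using c by (simp add: f1_def)
  show "f2 n > 0" for n using c by (simp add: f2_def)
  have mupos: "\<forall>x. mu c x > 0" using c by (auto simp: mu_def)
  have db: "\<forall>r\<in>R. \<forall>y. cle (fst r) y \<longrightarrow>
               mu c y * intensity \<kappa> r y = mu c (fire r y) * intensity \<kappa> (prod.swap r) (fire r y)"
    using pair mu_db by blast
  fix \<Gamma> assume pr: "pos_rec_component R \<kappa> \<Gamma>"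
  then have irr: "irreducible_component R \<kappa> \<Gamma>" unfolding pos_rec_component_def by blast
  have finG: "finite \<Gamma>" using irr_finite[OF cons irr] .
  have ne: "\<Gamma> \<noteq> {}" using irr unfolding irreducible_component_def by blast
  show "\<exists>Z>0. \<forall>\<pi>. stationary R \<kappa> \<Gamma> \<pi> \<longrightarrow> (\<forall>x\<in>\<Gamma>. \<pi> x = f1 (fst x) * f2 (snd x) / Z)"
  proof (intro exI conjI allI impI)
    show "sum (mu c) \<Gamma> > 0" using finG ne mupos by (intro sum_pos) auto
    fix \<pi> assume st: "stationary R \<kappa> \<Gamma> \<pi>"
    have "\<forall>x\<in>\<Gamma>. \<pi> x = mu c x / sum (mu c) \<Gamma>"
      by (rule unique_stat[OF sw kp mupos fin db irr finG st])
    moreover have "mu c x = f1 (fst x) * f2 (snd x)" for x by (simp add: mu_def f1_def f2_def)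
    ultimately show "\<forall>x\<in>\<Gamma>. \<pi> x = f1 (fst x) * f2 (snd x) / sum (mu c) \<Gamma>" by simp
  qed
qed
qed

lemma stat_w:
  fixes w :: "state \<Rightarrow> real"
  assumes fin: "finite R" and cons: "conservative R"
    and wpos: "\<forall>x. fst x + snd x = N \<longrightarrow> w x > 0"
    and bal: "\<forall>y. fst y + snd y = N \<longrightarrow> w y * (\<Sum>r\<in>R. intensity \<kappa> r y) =
        (\<Sum>r\<in>R. if cle (snd r) y
                  then (let x = (fst y - fst (snd r) + fst (fst r), snd y - snd (snd r) + snd (fst r))
                        in w x * intensity \<kappa> r x)
                  else 0)"
  shows "stationary R \<kappa> {x. fst x + snd x = N}
           (\<lambda>x. if x \<in> {x. fst x + snd x = N} then w x / sum w {x. fst x + snd x = N} else 0)"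
proof -
  define G where "G = {x::state. fst x + snd x = N}"
  define S where "S = sum w G"
  have finG: "finite G" unfolding G_def by (rule finite_level)
  have "(N,0) \<in> G" unfolding G_def by simp
  then have neG: "G \<noteq> {}" by blast
  have Spos: "S > 0" unfolding S_def using finG neG wpos by (intro sum_pos) (auto simp: G_def)
  define \<pi> where "\<pi> x = (if x \<in> G then w x / S else 0)" for x
  have "stationary R \<kappa> G \<pi>"
    unfolding stationary_def
  proof (intro conjI allI impI ballI)
    fix x show "\<pi> x \<ge> 0"
    proof (cases "x \<in> G")
      case True
      then have "w x > 0" using wpos unfolding G_def by blast
      then show ?thesis unfolding \<pi>_def using True Spos by simp
    next
      case False then show ?thesis unfolding \<pi>_def by simp
    qed
  next
    fix x assume "x \<notin> G" then show "\<pi> x = 0" unfolding \<pi>_def by simp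
  next
    have "sum \<pi> G = sum (\<lambda>x. w x / S) G" unfolding \<pi>_def by (rule sum.cong) auto
    also have "\<dots> = 1" using Spos by (simp add: sum_divide_distrib[symmetric] S_def)
    finally show "(\<pi> has_sum 1) G" unfolding has_sum_finite_iff[OF finG] by simp
  next
    fix y assume y: "y \<in> G"
    have yb: "w y * (\<Sum>r\<in>R. intensity \<kappa> r y) =
        (\<Sum>r\<in>R. if cle (snd r) y
                  then (let x = (fst y - fst (snd r) + fst (fst r), snd y - snd (snd r) + snd (fst r))
                        in w x * intensity \<kappa> r x)
                  else 0)" using y unfolding G_def by (intro bal[rule_format]) simp
    have "\<pi> y * (\<Sum>r\<in>R. intensity \<kappa> r y) = (w y * (\<Sum>r\<in>R. intensity \<kappa> r y)) / S"
      using y unfolding \<pi>_def by simp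
    also have "\<dots> = (\<Sum>r\<in>R. if cle (snd r) y
                  then (let x = (fst y - fst (snd r) + fst (fst r), snd y - snd (snd r) + snd (fst r))
                        in w x * intensity \<kappa> r x)
                  else 0) / S" using yb by (simp only:)
    also have "\<dots> = (\<Sum>r\<in>R. if cle (snd r) y
                  then (let x = (fst y - fst (snd r) + fst (fst r), snd y - snd (snd r) + snd (fst r))
                        in \<pi> x * intensity \<kappa> r x)
                  else 0)"
      unfolding sum_divide_distrib
    proof (rule sum.cong[OF refl])
      fix r assume r: "r \<in> R"
      show "(if cle (snd r) y
                  then (let x = (fst y - fst (snd r) + fst (fst r), snd y - snd (snd r) + snd (fst r))
                        in w x * intensity \<kappa> r x)
                  else 0) / S =
            (if cle (snd r) y
                  then (let x = (fst y - fst (snd r) + fst (fst r), snd y - snd (snd r) + snd (fst r))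
                        in \<pi> x * intensity \<kappa> r x)
                  else 0)"
      proof (cases "cle (snd r) y")
        case True
        have "fst (fst r) + snd (fst r) = fst (snd r) + snd (snd r)" using cons r unfolding conservative_def by blast
        then have "(fst y - fst (snd r) + fst (fst r), snd y - snd (snd r) + snd (fst r)) \<in> G"
          using True y unfolding G_def cle_def by auto
        then show ?thesis using True unfolding \<pi>_def Let_def by simp
      next
        case False then show ?thesis by simp
      qed
    qed
    finally show "\<pi> y * (\<Sum>r\<in>R. intensity \<kappa> r y) = (\<Sum>r\<in>R. if cle (snd r) y
                  then (let x = (fst y - fst (snd r) + fst (fst r), snd y - snd (snd r) + snd (fst r))
                        in \<pi> x * intensity \<kappa> r x)
                  else 0)" .
  qed
  then show ?thesis unfolding \<pi>_def S_def G_def .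
qed

lemma pf_get:
  assumes "product_form R \<kappa>"
  obtains f1 f2 :: "nat \<Rightarrow> real" where "\<forall>n. f1 n > 0" "\<forall>n. f2 n > 0"
    "\<And>\<Gamma> \<pi>. pos_rec_component R \<kappa> \<Gamma> \<Longrightarrow> stationary R \<kappa> \<Gamma> \<pi> \<Longrightarrow>
        \<exists>Z>0. \<forall>x\<in>\<Gamma>. \<pi> x = f1 (fst x) * f2 (snd x) / Z"
proof -
  from assms obtain f1 f2 :: "nat \<Rightarrow> real" where f: "\<forall>n. f1 n > 0" "\<forall>n. f2 n > 0"
     "\<forall>\<Gamma>. pos_rec_component R \<kappa> \<Gamma> \<longrightarrow>
           (\<exists>Z > 0. \<forall>\<pi>. stationary R \<kappa> \<Gamma> \<pi> \<longrightarrow>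
               (\<forall>x\<in>\<Gamma>. \<pi> x = f1 (fst x) * f2 (snd x) / Z))"
    unfolding product_form_def by (elim exE conjE) (rule that)
  show ?thesis
  proof (rule that)
    show "\<forall>n. f1 n > 0" by (rule f(1))
    show "\<forall>n. f2 n > 0" by (rule f(2))
    fix \<Gamma> \<pi> assume pr: "pos_rec_component R \<kappa> \<Gamma>" and st: "stationary R \<kappa> \<Gamma> \<pi>"
    obtain Z where Z: "Z > 0" "\<forall>\<pi>. stationary R \<kappa> \<Gamma> \<pi> \<longrightarrow>
               (\<forall>x\<in>\<Gamma>. \<pi> x = f1 (fst x) * f2 (snd x) / Z)" using f(3) pr by blast
    have "\<forall>x\<in>\<Gamma>. \<pi> x = f1 (fst x) * f2 (snd x) / Z" using Z(2) st by blast
    then show "\<exists>Z>0. \<forall>x\<in>\<Gamma>. \<pi> x = f1 (fst x) * f2 (snd x) / Z" using Z(1) by blast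
  qed
qed

lemma pf_level:
  fixes w :: "state \<Rightarrow> real"
  assumes fin: "finite R" and cons: "conservative R" and sw: "\<forall>r\<in>R. prod.swap r \<in> R"
    and kp: "\<forall>r\<in>R. \<kappa> r > 0"
    and hub: "\<forall>x. fst x + snd x = N \<longrightarrow> reach R \<kappa> x (N, 0)"
    and wpos: "\<forall>x. fst x + snd x = N \<longrightarrow> w x > 0"
    and bal: "\<forall>y. fst y + snd y = N \<longrightarrow> w y * (\<Sum>r\<in>R. intensity \<kappa> r y) =
        (\<Sum>r\<in>R. if cle (snd r) y
                  then (let x = (fst y - fst (snd r) + fst (fst r), snd y - snd (snd r) + snd (fst r))
                        in w x * intensity \<kappa> r x)
                  else 0)"
    and f: "\<And>\<Gamma> \<pi>. pos_rec_component R \<kappa> \<Gamma> \<Longrightarrow> stationary R \<kappa> \<Gamma> \<pi> \<Longrightarrow>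
        \<exists>Z>0. \<forall>x\<in>\<Gamma>. \<pi> x = f1 (fst x) * f2 (snd x) / Z"
  shows "\<exists>t>0. \<forall>x. fst x + snd x = N \<longrightarrow> w x = t * (f1 (fst x) * f2 (snd x))"
proof -
  define G where "G = {x::state. fst x + snd x = N}"
  have st: "stationary R \<kappa> G (\<lambda>x. if x \<in> G then w x / sum w G else 0)"
    unfolding G_def by (rule stat_w[OF fin cons wpos bal])
  have irr: "irreducible_component R \<kappa> G" unfolding G_def by (rule irreducible_hub[OF sw kp cons hub])
  have pr: "pos_rec_component R \<kappa> G" unfolding pos_rec_component_def using irr st by blast
  obtain Z where Z: "Z > 0" "\<forall>x\<in>G. (if x \<in> G then w x / sum w G else 0) = f1 (fst x) * f2 (snd x) / Z"
    using f[OF pr st] by blast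
  have finG: "finite G" unfolding G_def by (rule finite_level)
  have "(N,0) \<in> G" unfolding G_def by simp
  then have neG: "G \<noteq> {}" by blast
  have Spos: "sum w G > 0" using finG neG wpos by (intro sum_pos) (auto simp: G_def)
  show ?thesis
  proof (intro exI conjI allI impI)
    show "sum w G / Z > 0" using Spos Z by simp
    fix x assume "fst x + snd x = N"
    then have x: "x \<in> G" unfolding G_def by simp
    then have "w x / sum w G = f1 (fst x) * f2 (snd x) / Z" using Z by simp
    then show "w x = sum w G / Z * (f1 (fst x) * f2 (snd x))" using Spos Z by (simp add: field_simps)
  qed
qed

lemma Collect_insert_conj: "{r \<in> insert a A. P r} = (if P a then insert a {r\<in>A. P r} else {r\<in>A. P r})"
  by auto

lemma Collect_empty_conj: "{r \<in> {}. P r} = {}" by simp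


lemma pf_ex:
  assumes "product_form R \<kappa>"
  shows "\<exists>f1 f2 :: nat \<Rightarrow> real. \<forall>\<Gamma> \<pi>. pos_rec_component R \<kappa> \<Gamma> \<longrightarrow> stationary R \<kappa> \<Gamma> \<pi> \<longrightarrow>
        (\<exists>Z>0. \<forall>x\<in>\<Gamma>. \<pi> x = f1 (fst x) * f2 (snd x) / Z)"
proof -
  obtain f1 f2 :: "nat \<Rightarrow> real" where f:
     "\<forall>\<Gamma>. pos_rec_component R \<kappa> \<Gamma> \<longrightarrow>
           (\<exists>Z > 0. \<forall>\<pi>. stationary R \<kappa> \<Gamma> \<pi> \<longrightarrow>
               (\<forall>x\<in>\<Gamma>. \<pi> x = f1 (fst x) * f2 (snd x) / Z))"
    using assms unfolding product_form_def by blast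
  have "\<forall>\<Gamma> \<pi>. pos_rec_component R \<kappa> \<Gamma> \<longrightarrow> stationary R \<kappa> \<Gamma> \<pi> \<longrightarrow>
        (\<exists>Z>0. \<forall>x\<in>\<Gamma>. \<pi> x = f1 (fst x) * f2 (snd x) / Z)"
  proof (intro allI impI)
    fix \<Gamma> \<pi> assume pr: "pos_rec_component R \<kappa> \<Gamma>" and st: "stationary R \<kappa> \<Gamma> \<pi>"
    obtain Z where Z: "Z > 0" "\<forall>\<pi>. stationary R \<kappa> \<Gamma> \<pi> \<longrightarrow>
               (\<forall>x\<in>\<Gamma>. \<pi> x = f1 (fst x) * f2 (snd x) / Z)" using f pr by blast
    have "\<forall>x\<in>\<Gamma>. \<pi> x = f1 (fst x) * f2 (snd x) / Z" using Z(2) st by blast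
    then show "\<exists>Z>0. \<forall>x\<in>\<Gamma>. \<pi> x = f1 (fst x) * f2 (snd x) / Z" using Z(1) by blast
  qed
  then show ?thesis by blast
qed



definition w3 :: "real \<Rightarrow> real \<Rightarrow> real \<Rightarrow> real \<Rightarrow> state \<Rightarrow> real" where
  "w3 a b l1 l2 x = (if x = (0,1) then a else (if x = (1,0) then b else (if x = (0,2) then 2 * a^2 + 2 * a * l1 + 2 * b * l1 else (if x = (1,1) then 4 * a * b + 4 * a * l2 + 4 * b * l1 else (if x = (2,0) then 2 * a * l2 + 2 * b^2 + 2 * b * l2 else (if x = (0,3) then 6 * a^3 + 18 * a^2 * l1 + 18 * a * b * l1 + 12 * a * l1^2 + 12 * a * l1 * l2 + 24 * b * l1^2 else (if x = (1,2) then 18 * a^2 * b + 36 * a^2 * l2 + 54 * a * b * l1 + 72 * a * l1 * l2 + 18 * b^2 * l1 + 36 * b * l1^2 + 36 * b * l1 * l2 else (if x = (2,1) then 18 * a^2 * l2 + 18 * a * b^2 + 54 * a * b * l2 + 36 * a * l1 * l2 + 36 * a * l2^2 + 36 * b^2 * l1 + 72 * b * l1 * l2 else (if x = (3,0) then 18 * a * b * l2 + 24 * a * l2^2 + 6 * b^3 + 18 * b^2 * l2 + 12 * b * l1 * l2 + 12 * b * l2^2 else 1)))))))))"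

lemma W3_facts: "finite W3" "\<forall>r\<in>W3. prod.swap r \<in> W3" "conservative W3"
  by (auto simp: W3_def conservative_def)

lemma lvl1: "fst (y::state) + snd y = 1 \<Longrightarrow> y = (0,1) \<or> y = (1,0)"
proof (cases y)
  case (Pair p q)
  assume "fst y + snd y = 1"
  then have "p + q = 1" using Pair by simp
  then have "(p,q) = (0,1) \<or> (p,q) = (1,0)" by auto
  then show ?thesis using Pair by simp
qed
lemma lvl2: "fst (y::state) + snd y = 2 \<Longrightarrow> y = (0,2) \<or> y = (1,1) \<or> y = (2,0)"
proof (cases y)
  case (Pair p q)
  assume "fst y + snd y = 2"
  then have "p + q = 2" using Pair by simp
  then have "(p,q) = (0,2) \<or> (p,q) = (1,1) \<or> (p,q) = (2,0)" by auto
  then show ?thesis using Pair by simp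
qed
lemma lvl3: "fst (y::state) + snd y = 3 \<Longrightarrow> y = (0,3) \<or> y = (1,2) \<or> y = (2,1) \<or> y = (3,0)"
proof (cases y)
  case (Pair p q)
  assume "fst y + snd y = 3"
  then have "p + q = 3" using Pair by simp
  then have "(p,q) = (0,3) \<or> (p,q) = (1,2) \<or> (p,q) = (2,1) \<or> (p,q) = (3,0)" by auto
  then show ?thesis using Pair by simp
qed
lemma lvl4: "fst (y::state) + snd y = 4 \<Longrightarrow> y = (0,4) \<or> y = (1,3) \<or> y = (2,2) \<or> y = (3,1) \<or> y = (4,0)"
proof (cases y)
  case (Pair p q)
  assume "fst y + snd y = 4"
  then have "p + q = 4" using Pair by simp
  then have "(p,q) = (0,4) \<or> (p,q) = (1,3) \<or> (p,q) = (2,2) \<or> (p,q) = (3,1) \<or> (p,q) = (4,0)" by auto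
  then show ?thesis using Pair by simp
qed

lemma W3_bal1:
  assumes k: "\<kappa> ((1,0),(0,1)) = a" "\<kappa> ((0,1),(1,0)) = b" "\<kappa> ((2,0),(0,2)) = l1" "\<kappa> ((0,2),(2,0)) = l2"
  shows "\<forall>y. fst y + snd y = 1 \<longrightarrow> w3 a b l1 l2 y * (\<Sum>r\<in>W3. intensity \<kappa> r y) =
        (\<Sum>r\<in>W3. if cle (snd r) y
                  then (let x = (fst y - fst (snd r) + fst (fst r), snd y - snd (snd r) + snd (fst r))
                        in w3 a b l1 l2 x * intensity \<kappa> r x)
                  else 0)"
proof -
  have k': "\<kappa> ((Suc 0,0),(0,Suc 0)) = a" "\<kappa> ((0,Suc 0),(Suc 0,0)) = b" using k by simp_all
  show ?thesis
    by (intro allI impI, drule lvl1, elim disjE;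
        simp add: W3_def intensity_def cle_def w3_def k k' fact_numeral; algebra)
qed

lemma W3_bal2:
  assumes k: "\<kappa> ((1,0),(0,1)) = a" "\<kappa> ((0,1),(1,0)) = b" "\<kappa> ((2,0),(0,2)) = l1" "\<kappa> ((0,2),(2,0)) = l2"
  shows "\<forall>y. fst y + snd y = 2 \<longrightarrow> w3 a b l1 l2 y * (\<Sum>r\<in>W3. intensity \<kappa> r y) =
        (\<Sum>r\<in>W3. if cle (snd r) y
                  then (let x = (fst y - fst (snd r) + fst (fst r), snd y - snd (snd r) + snd (fst r))
                        in w3 a b l1 l2 x * intensity \<kappa> r x)
                  else 0)"
proof -
  have k': "\<kappa> ((Suc 0,0),(0,Suc 0)) = a" "\<kappa> ((0,Suc 0),(Suc 0,0)) = b" using k by simp_all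
  show ?thesis
    by (intro allI impI, drule lvl2, elim disjE;
        simp add: W3_def intensity_def cle_def w3_def k k' fact_numeral; algebra)
qed

lemma W3_bal3:
  assumes k: "\<kappa> ((1,0),(0,1)) = a" "\<kappa> ((0,1),(1,0)) = b" "\<kappa> ((2,0),(0,2)) = l1" "\<kappa> ((0,2),(2,0)) = l2"
  shows "\<forall>y. fst y + snd y = 3 \<longrightarrow> w3 a b l1 l2 y * (\<Sum>r\<in>W3. intensity \<kappa> r y) =
        (\<Sum>r\<in>W3. if cle (snd r) y
                  then (let x = (fst y - fst (snd r) + fst (fst r), snd y - snd (snd r) + snd (fst r))
                        in w3 a b l1 l2 x * intensity \<kappa> r x)
                  else 0)"
proof -
  have k': "\<kappa> ((Suc 0,0),(0,Suc 0)) = a" "\<kappa> ((0,Suc 0),(Suc 0,0)) = b" using k by simp_all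
  show ?thesis
    by (intro allI impI, drule lvl3, elim disjE;
        simp add: W3_def intensity_def cle_def w3_def k k' fact_numeral; algebra)
qed


lemma W3_hub:
  assumes kp: "\<forall>r\<in>W3. \<kappa> r > 0"
  shows "reach W3 \<kappa> (p, q) (p + q, 0)"
proof (induction q arbitrary: p)
  case 0 then show ?case unfolding reach_def by simp
next
  case (Suc q)
  have "step W3 \<kappa> (p, Suc q) (p + 1, q)"
    by (rule step_intro[of "((0,1),(1,0))"]) (use kp in \<open>auto simp: W3_def cle_def fire_def\<close>)
  moreover have "reach W3 \<kappa> (p + 1, q) (p + 1 + q, 0)" by (rule Suc.IH)
  ultimately show ?case unfolding reach_def by (simp add: converse_rtranclp_into_rtranclp)
qed

lemma W3_hubN:
  assumes kp: "\<forall>r\<in>W3. \<kappa> r > 0"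
  shows "\<forall>x. fst x + snd x = N \<longrightarrow> reach W3 \<kappa> x (N, 0)"
  using W3_hub[OF kp] by auto

lemma W3_cb_pair:
  assumes cb: "complex_balanced W3 \<kappa>"
  shows "\<exists>c. fst c > 0 \<and> snd c > 0 \<and> (\<forall>r\<in>W3. \<kappa> r * cpow c (fst r) = \<kappa> (prod.swap r) * cpow c (snd r))"
proof -
  obtain c where c: "fst c > 0" "snd c > 0" and bal: "\<forall>\<eta>\<in>complexes W3.
           (\<Sum>r\<in>{r\<in>W3. snd r = \<eta>}. \<kappa> r * cpow c (fst r)) =
           (\<Sum>r\<in>{r\<in>W3. fst r = \<eta>}. \<kappa> r * cpow c \<eta>)"
    using cb unfolding complex_balanced_def by blast
  have "(1,0) \<in> complexes W3" "(2,0) \<in> complexes W3" by (auto simp: complexes_def W3_def)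
  then have h1: "(\<Sum>r\<in>{r\<in>W3. snd r = (1,0)}. \<kappa> r * cpow c (fst r)) =
           (\<Sum>r\<in>{r\<in>W3. fst r = (1,0)}. \<kappa> r * cpow c (1,0))"
    and h2: "(\<Sum>r\<in>{r\<in>W3. snd r = (2,0)}. \<kappa> r * cpow c (fst r)) =
           (\<Sum>r\<in>{r\<in>W3. fst r = (2,0)}. \<kappa> r * cpow c (2,0))"
    using bal by blast+
  have e1: "\<kappa> ((0,1),(1,0)) * snd c = \<kappa> ((1,0),(0,1)) * fst c"
    using h1 by (simp only: W3_def Collect_insert_conj Collect_empty_conj) (simp add: cpow_def)
  have e2: "\<kappa> ((0,2),(2,0)) * snd c ^ 2 = \<kappa> ((2,0),(0,2)) * fst c ^ 2"
    using h2 by (simp only: W3_def Collect_insert_conj Collect_empty_conj) (simp add: cpow_def)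
  show ?thesis
    using c e1 e2 by (intro exI[of _ c]) (auto simp: W3_def cpow_def)
qed

lemma W3_cb_of:
  assumes pos: "a > 0" "b > 0" and k: "\<kappa> ((1,0),(0,1)) = a" "\<kappa> ((0,1),(1,0)) = b" "\<kappa> ((2,0),(0,2)) = l1" "\<kappa> ((0,2),(2,0)) = l2"
    and e: "a^2 * l2 = b^2 * l1"
  shows "complex_balanced W3 \<kappa>"
  unfolding complex_balanced_def
proof (rule exI[of _ "(b,a)"], intro conjI)
  have k': "\<kappa> ((Suc 0,0),(0,Suc 0)) = a" "\<kappa> ((0,Suc 0),(Suc 0,0)) = b" using k by simp_all
  show "fst (b,a) > 0" "snd (b,a) > 0" using pos by simp_all
  show "\<forall>\<eta>\<in>complexes W3.
           (\<Sum>r\<in>{r\<in>W3. snd r = \<eta>}. \<kappa> r * cpow (b,a) (fst r)) =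
           (\<Sum>r\<in>{r\<in>W3. fst r = \<eta>}. \<kappa> r * cpow (b,a) \<eta>)"
    using e by (simp only: complexes_def W3_def Collect_insert_conj Collect_empty_conj image_insert image_empty)
      (simp add: cpow_def k k' mult_ac)
qed

lemma W3_wpos1:
  assumes pos: "a > 0" "b > 0" "l1 > 0" "l2 > 0"
  shows "\<forall>x. fst x + snd x = 1 \<longrightarrow> w3 a b l1 l2 x > 0"
  by (intro allI impI, drule lvl1, elim disjE; simp add: w3_def;
      (intro add_pos_pos mult_pos_pos zero_less_power)?; simp add: pos)

lemma W3_wpos2:
  assumes pos: "a > 0" "b > 0" "l1 > 0" "l2 > 0"
  shows "\<forall>x. fst x + snd x = 2 \<longrightarrow> w3 a b l1 l2 x > 0"
  by (intro allI impI, drule lvl2, elim disjE; simp add: w3_def;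
      (intro add_pos_pos mult_pos_pos zero_less_power)?; simp add: pos)

lemma W3_wpos3:
  assumes pos: "a > 0" "b > 0" "l1 > 0" "l2 > 0"
  shows "\<forall>x. fst x + snd x = 3 \<longrightarrow> w3 a b l1 l2 x > 0"
  by (intro allI impI, drule lvl3, elim disjE; simp add: w3_def;
      (intro add_pos_pos mult_pos_pos zero_less_power)?; simp add: pos)

lemma W3_thm:
  assumes kp: "\<forall>r\<in>W3. \<kappa> r > 0"
  shows "product_form W3 \<kappa> \<longleftrightarrow> complex_balanced W3 \<kappa>"
proof
  assume "complex_balanced W3 \<kappa>"
  then obtain c where c: "fst c > 0" "snd c > 0"
    "\<forall>r\<in>W3. \<kappa> r * cpow c (fst r) = \<kappa> (prod.swap r) * cpow c (snd r)"
    using W3_cb_pair by blast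
  show "product_form W3 \<kappa>"
    by (rule cb_pf[OF W3_facts(1,2) kp W3_facts(3) c])
next
  assume pf: "product_form W3 \<kappa>"
  define a where "a = \<kappa> ((1,0),(0,1))"
  define b where "b = \<kappa> ((0,1),(1,0))"
  define l1 where "l1 = \<kappa> ((2,0),(0,2))"
  define l2 where "l2 = \<kappa> ((0,2),(2,0))"
  have k: "\<kappa> ((1,0),(0,1)) = a" "\<kappa> ((0,1),(1,0)) = b" "\<kappa> ((2,0),(0,2)) = l1" "\<kappa> ((0,2),(2,0)) = l2"
    by (simp_all add: a_def b_def l1_def l2_def)
  have pos: "a > 0" "b > 0" "l1 > 0" "l2 > 0" using kp by (auto simp: W3_def a_def b_def l1_def l2_def)
  obtain f1 f2 :: "nat \<Rightarrow> real" where
     F0: "\<forall>\<Gamma> \<pi>. pos_rec_component W3 \<kappa> \<Gamma> \<longrightarrow> stationary W3 \<kappa> \<Gamma> \<pi> \<longrightarrow>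
        (\<exists>Z>0. \<forall>x\<in>\<Gamma>. \<pi> x = f1 (fst x) * f2 (snd x) / Z)"
    using pf_ex[OF pf] by blast
  note F = F0[rule_format]
  note fa = W3_facts(1) W3_facts(3) W3_facts(2) kp
  obtain t1 where t1: "\<forall>x. fst x + snd x = 1 \<longrightarrow> w3 a b l1 l2 x = t1 * (f1 (fst x) * f2 (snd x))"
    using pf_level[OF fa W3_hubN[OF kp] W3_wpos1[OF pos] W3_bal1[OF k] F] by blast
  obtain t2 where t2: "\<forall>x. fst x + snd x = 2 \<longrightarrow> w3 a b l1 l2 x = t2 * (f1 (fst x) * f2 (snd x))"
    using pf_level[OF fa W3_hubN[OF kp] W3_wpos2[OF pos] W3_bal2[OF k] F] by blast
  obtain t3 where t3: "\<forall>x. fst x + snd x = 3 \<longrightarrow> w3 a b l1 l2 x = t3 * (f1 (fst x) * f2 (snd x))"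
    using pf_level[OF fa W3_hubN[OF kp] W3_wpos3[OF pos] W3_bal3[OF k] F] by blast
  have "w3 a b l1 l2 (2,1) * w3 a b l1 l2 (0,2) * w3 a b l1 l2 (1,0) =
        (t3 * (f1 2 * f2 1)) * (t2 * (f1 0 * f2 2)) * (t1 * (f1 1 * f2 0))"
    using t1[rule_format, of "(1,0)"] t2[rule_format, of "(0,2)"] t3[rule_format, of "(2,1)"] by simp
  also have "\<dots> = (t3 * (f1 1 * f2 2)) * (t2 * (f1 2 * f2 0)) * (t1 * (f1 0 * f2 1))"
    by (simp add: mult_ac)
  also have "\<dots> = w3 a b l1 l2 (1,2) * w3 a b l1 l2 (2,0) * w3 a b l1 l2 (0,1)"
    using t1[rule_format, of "(0,1)"] t2[rule_format, of "(2,0)"] t3[rule_format, of "(1,2)"] by simp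
  finally have eq: "w3 a b l1 l2 (2,1) * w3 a b l1 l2 (0,2) * w3 a b l1 l2 (1,0) =
     w3 a b l1 l2 (1,2) * w3 a b l1 l2 (2,0) * w3 a b l1 l2 (0,1)" .
  define Q where "Q = 72*a^2*l2 + 144*a*l1*l2 + 72*b^2*l1 + 144*b*l1*l2"
  have Qpos: "Q > 0" unfolding Q_def using pos by (intro add_pos_pos mult_pos_pos) auto
  have "(a^2 * l2 - b^2 * l1) * Q = 0"
    using eq unfolding Q_def by (simp add: w3_def) algebra
  then have "a^2 * l2 = b^2 * l1" using Qpos by simp
  then show "complex_balanced W3 \<kappa>" using W3_cb_of[OF pos(1,2) k] by blast
qed



definition w4 :: "real \<Rightarrow> real \<Rightarrow> real \<Rightarrow> real \<Rightarrow> state \<Rightarrow> real" where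
  "w4 a b l1 l2 x = (if x = (0,2) then 2 * b * l1 else (if x = (1,1) then 4 * a * l2 else (if x = (2,0) then 2 * b * l2 else (if x = (0,3) then 24 * a * b * l1 + 24 * a * l1 * l2 + 24 * b * l1^2 else (if x = (1,2) then 72 * a^2 * l2 + 72 * a * l1 * l2 + 72 * b * l1 * l2 else (if x = (2,1) then 72 * a * b * l2 + 72 * a * l2^2 + 72 * b * l1 * l2 else (if x = (3,0) then 24 * a * l2^2 + 24 * b^2 * l2 + 24 * b * l2^2 else (if x = (0,4) then 432 * a^2 * b * l1 + 864 * a^2 * l1 * l2 + 864 * a * b * l1^2 + 864 * a * l1^2 * l2 + 216 * b^2 * l1^2 + 432 * b * l1^3 + 432 * b * l1^2 * l2 else (if x = (1,3) then 1728 * a^3 * l2 + 3456 * a^2 * l1 * l2 + 4320 * a * b * l1 * l2 + 1728 * a * l1^2 * l2 + 1728 * a * l1 * l2^2 + 3456 * b * l1^2 * l2 else (if x = (2,2) then 2592 * a^2 * b * l2 + 5184 * a^2 * l2^2 + 5184 * a * b * l1 * l2 + 5184 * a * l1 * l2^2 + 1296 * b^2 * l1 * l2 + 2592 * b * l1^2 * l2 + 2592 * b * l1 * l2^2 else (if x = (3,1) then 1728 * a^2 * l2^2 + 1728 * a * b^2 * l2 + 4320 * a * b * l2^2 + 1728 * a * l1 * l2^2 + 1728 * a * l2^3 + 1728 * b^2 * l1 * l2 + 3456 * b * l1 * l2^2 else (if x = (4,0) then 864 * a * b * l2^2 + 864 * a * l2^3 + 432 * b^3 * l2 + 1080 * b^2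 * l2^2 + 432 * b * l1 * l2^2 + 432 * b * l2^3 else 1))))))))))))"

lemma W4_facts: "finite W4" "\<forall>r\<in>W4. prod.swap r \<in> W4" "conservative W4"
  by (auto simp: W4_def conservative_def)

lemma W4_bal2:
  assumes k: "\<kappa> ((2,0),(1,1)) = a" "\<kappa> ((1,1),(2,0)) = b" "\<kappa> ((2,0),(0,2)) = l1" "\<kappa> ((0,2),(2,0)) = l2"
  shows "\<forall>y. fst y + snd y = 2 \<longrightarrow> w4 a b l1 l2 y * (\<Sum>r\<in>W4. intensity \<kappa> r y) =
        (\<Sum>r\<in>W4. if cle (snd r) y
                  then (let x = (fst y - fst (snd r) + fst (fst r), snd y - snd (snd r) + snd (fst r))
                        in w4 a b l1 l2 x * intensity \<kappa> r x)
                  else 0)"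
proof -
  have k': "\<kappa> ((2,0),(Suc 0,Suc 0)) = a" "\<kappa> ((Suc 0,Suc 0),(2,0)) = b" using k by simp_all
  show ?thesis
    by (intro allI impI, drule lvl2, elim disjE;
        simp add: W4_def intensity_def cle_def w4_def k k' fact_numeral; algebra)
qed

lemma W4_wpos2:
  assumes pos: "a > 0" "b > 0" "l1 > 0" "l2 > 0"
  shows "\<forall>x. fst x + snd x = 2 \<longrightarrow> w4 a b l1 l2 x > 0"
  by (intro allI impI, drule lvl2, elim disjE; simp add: w4_def;
      (intro add_pos_pos mult_pos_pos zero_less_power)?; simp add: pos)

lemma W4_bal3:
  assumes k: "\<kappa> ((2,0),(1,1)) = a" "\<kappa> ((1,1),(2,0)) = b" "\<kappa> ((2,0),(0,2)) = l1" "\<kappa> ((0,2),(2,0)) = l2"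
  shows "\<forall>y. fst y + snd y = 3 \<longrightarrow> w4 a b l1 l2 y * (\<Sum>r\<in>W4. intensity \<kappa> r y) =
        (\<Sum>r\<in>W4. if cle (snd r) y
                  then (let x = (fst y - fst (snd r) + fst (fst r), snd y - snd (snd r) + snd (fst r))
                        in w4 a b l1 l2 x * intensity \<kappa> r x)
                  else 0)"
proof -
  have k': "\<kappa> ((2,0),(Suc 0,Suc 0)) = a" "\<kappa> ((Suc 0,Suc 0),(2,0)) = b" using k by simp_all
  show ?thesis
    by (intro allI impI, drule lvl3, elim disjE;
        simp add: W4_def intensity_def cle_def w4_def k k' fact_numeral; algebra)
qed

lemma W4_wpos3:
  assumes pos: "a > 0" "b > 0" "l1 > 0" "l2 > 0"
  shows "\<forall>x. fst x + snd x = 3 \<longrightarrow> w4 a b l1 l2 x > 0"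
  by (intro allI impI, drule lvl3, elim disjE; simp add: w4_def;
      (intro add_pos_pos mult_pos_pos zero_less_power)?; simp add: pos)

lemma W4_bal4:
  assumes k: "\<kappa> ((2,0),(1,1)) = a" "\<kappa> ((1,1),(2,0)) = b" "\<kappa> ((2,0),(0,2)) = l1" "\<kappa> ((0,2),(2,0)) = l2"
  shows "\<forall>y. fst y + snd y = 4 \<longrightarrow> w4 a b l1 l2 y * (\<Sum>r\<in>W4. intensity \<kappa> r y) =
        (\<Sum>r\<in>W4. if cle (snd r) y
                  then (let x = (fst y - fst (snd r) + fst (fst r), snd y - snd (snd r) + snd (fst r))
                        in w4 a b l1 l2 x * intensity \<kappa> r x)
                  else 0)"
proof -
  have k': "\<kappa> ((2,0),(Suc 0,Suc 0)) = a" "\<kappa> ((Suc 0,Suc 0),(2,0)) = b" using k by simp_all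
  show ?thesis
    by (intro allI impI, drule lvl4, elim disjE;
        simp add: W4_def intensity_def cle_def w4_def k k' fact_numeral; algebra)
qed

lemma W4_wpos4:
  assumes pos: "a > 0" "b > 0" "l1 > 0" "l2 > 0"
  shows "\<forall>x. fst x + snd x = 4 \<longrightarrow> w4 a b l1 l2 x > 0"
  by (intro allI impI, drule lvl4, elim disjE; simp add: w4_def;
      (intro add_pos_pos mult_pos_pos zero_less_power)?; simp add: pos)

lemma W4_hub:
  assumes kp: "\<forall>r\<in>W4. \<kappa> r > 0"
  shows "p + q \<ge> 2 \<Longrightarrow> reach W4 \<kappa> (p, q) (p + q, 0)"
proof (induction q arbitrary: p rule: less_induct)
  case (less q)
  show ?case
  proof (cases "q = 0")
    case True then show ?thesis unfolding reach_def by simp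
  next
    case False
    show ?thesis
    proof (cases "p = 0")
      case False
      have "step W4 \<kappa> (p, q) (p + 1, q - 1)"
        by (rule step_intro[of "((1,1),(2,0))"]) (use kp \<open>q \<noteq> 0\<close> False in \<open>auto simp: W4_def cle_def fire_def\<close>)
      moreover have "reach W4 \<kappa> (p + 1, q - 1) (p + 1 + (q - 1), 0)"
        using less.IH[of "q - 1" "p + 1"] \<open>q \<noteq> 0\<close> less.prems by simp
      ultimately show ?thesis unfolding reach_def using \<open>q \<noteq> 0\<close>
        by (simp add: converse_rtranclp_into_rtranclp)
    next
      case True
      then have q2: "q \<ge> 2" using less.prems by simp
      have st: "step W4 \<kappa> (p, q) (2, q - 2)"
        by (rule step_intro[of "((0,2),(2,0))"]) (use kp q2 True in \<open>auto simp: W4_def cle_def fire_def\<close>)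
      have r1: "reach W4 \<kappa> (2, q - 2) (2 + (q - 2), 0)"
        using less.IH[of "q - 2" 2] q2 by simp
      have eqq: "2 + (q - 2) = p + q" using q2 True by simp
      have r2: "reach W4 \<kappa> (2, q - 2) (p + q, 0)" using r1 unfolding eqq .
      show ?thesis using converse_rtranclp_into_rtranclp[OF st r2[unfolded reach_def]] unfolding reach_def .
    qed
  qed
qed

lemma W4_hubN:
  assumes kp: "\<forall>r\<in>W4. \<kappa> r > 0" and N: "N \<ge> 2"
  shows "\<forall>x. fst x + snd x = N \<longrightarrow> reach W4 \<kappa> x (N, 0)"
proof (intro allI impI)
  fix x :: state assume x: "fst x + snd x = N"
  have "reach W4 \<kappa> (fst x, snd x) (fst x + snd x, 0)" using W4_hub[OF kp, of "fst x" "snd x"] x N by simp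
  then show "reach W4 \<kappa> x (N, 0)" using x by simp
qed

lemma W4_cb_pair:
  assumes cb: "complex_balanced W4 \<kappa>"
  shows "\<exists>c. fst c > 0 \<and> snd c > 0 \<and> (\<forall>r\<in>W4. \<kappa> r * cpow c (fst r) = \<kappa> (prod.swap r) * cpow c (snd r))"
proof -
  obtain c where c: "fst c > 0" "snd c > 0" and bal: "\<forall>\<eta>\<in>complexes W4.
           (\<Sum>r\<in>{r\<in>W4. snd r = \<eta>}. \<kappa> r * cpow c (fst r)) =
           (\<Sum>r\<in>{r\<in>W4. fst r = \<eta>}. \<kappa> r * cpow c \<eta>)"
    using cb unfolding complex_balanced_def by blast
  have "(1,1) \<in> complexes W4" "(0,2) \<in> complexes W4" by (auto simp: complexes_def W4_def)
  then have h1: "(\<Sum>r\<in>{r\<in>W4. snd r = (1,1)}. \<kappa> r * cpow c (fst r)) =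
           (\<Sum>r\<in>{r\<in>W4. fst r = (1,1)}. \<kappa> r * cpow c (1,1))"
    and h2: "(\<Sum>r\<in>{r\<in>W4. snd r = (0,2)}. \<kappa> r * cpow c (fst r)) =
           (\<Sum>r\<in>{r\<in>W4. fst r = (0,2)}. \<kappa> r * cpow c (0,2))"
    using bal by blast+
  have e1: "\<kappa> ((2,0),(1,1)) * fst c ^ 2 = \<kappa> ((1,1),(2,0)) * (fst c * snd c)"
    using h1 by (simp only: W4_def Collect_insert_conj Collect_empty_conj) (simp add: cpow_def)
  have e2: "\<kappa> ((2,0),(0,2)) * fst c ^ 2 = \<kappa> ((0,2),(2,0)) * snd c ^ 2"
    using h2 by (simp only: W4_def Collect_insert_conj Collect_empty_conj) (simp add: cpow_def)
  show ?thesis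
    using c e1 e2 by (intro exI[of _ c]) (auto simp: W4_def cpow_def)
qed

lemma W4_cb_of:
  assumes pos: "a > 0" "b > 0" and k: "\<kappa> ((2,0),(1,1)) = a" "\<kappa> ((1,1),(2,0)) = b" "\<kappa> ((2,0),(0,2)) = l1" "\<kappa> ((0,2),(2,0)) = l2"
    and e: "a^2 * l2 = b^2 * l1"
  shows "complex_balanced W4 \<kappa>"
  unfolding complex_balanced_def
proof (rule exI[of _ "(b,a)"], intro conjI)
  have k': "\<kappa> ((2,0),(Suc 0,Suc 0)) = a" "\<kappa> ((Suc 0,Suc 0),(2,0)) = b" using k by simp_all
  show "fst (b,a) > 0" "snd (b,a) > 0" using pos by simp_all
  show "\<forall>\<eta>\<in>complexes W4.
           (\<Sum>r\<in>{r\<in>W4. snd r = \<eta>}. \<kappa> r * cpow (b,a) (fst r)) =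
           (\<Sum>r\<in>{r\<in>W4. fst r = \<eta>}. \<kappa> r * cpow (b,a) \<eta>)"
    using e by (simp only: complexes_def W4_def Collect_insert_conj Collect_empty_conj image_insert image_empty)
      (simp add: cpow_def k k' algebra_simps power2_eq_square)
qed

lemma W4_thm:
  assumes kp: "\<forall>r\<in>W4. \<kappa> r > 0"
  shows "product_form W4 \<kappa> \<longleftrightarrow> complex_balanced W4 \<kappa>"
proof
  assume "complex_balanced W4 \<kappa>"
  then obtain c where c: "fst c > 0" "snd c > 0"
    "\<forall>r\<in>W4. \<kappa> r * cpow c (fst r) = \<kappa> (prod.swap r) * cpow c (snd r)"
    using W4_cb_pair by blast
  show "product_form W4 \<kappa>"
    by (rule cb_pf[OF W4_facts(1,2) kp W4_facts(3) c])
next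
  assume pf: "product_form W4 \<kappa>"
  define a where "a = \<kappa> ((2,0),(1,1))"
  define b where "b = \<kappa> ((1,1),(2,0))"
  define l1 where "l1 = \<kappa> ((2,0),(0,2))"
  define l2 where "l2 = \<kappa> ((0,2),(2,0))"
  have k: "\<kappa> ((2,0),(1,1)) = a" "\<kappa> ((1,1),(2,0)) = b" "\<kappa> ((2,0),(0,2)) = l1" "\<kappa> ((0,2),(2,0)) = l2"
    by (simp_all add: a_def b_def l1_def l2_def)
  have pos: "a > 0" "b > 0" "l1 > 0" "l2 > 0" using kp by (auto simp: W4_def a_def b_def l1_def l2_def)
  obtain f1 f2 :: "nat \<Rightarrow> real" where
     F0: "\<forall>\<Gamma> \<pi>. pos_rec_component W4 \<kappa> \<Gamma> \<longrightarrow> stationary W4 \<kappa> \<Gamma> \<pi> \<longrightarrow>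
        (\<exists>Z>0. \<forall>x\<in>\<Gamma>. \<pi> x = f1 (fst x) * f2 (snd x) / Z)"
    using pf_ex[OF pf] by blast
  note F = F0[rule_format]
  note fa = W4_facts(1) W4_facts(3) W4_facts(2) kp
  have h2: "\<forall>x. fst x + snd x = 2 \<longrightarrow> reach W4 \<kappa> x (2, 0)" by (rule W4_hubN[OF kp]) simp
  have h3: "\<forall>x. fst x + snd x = 3 \<longrightarrow> reach W4 \<kappa> x (3, 0)" by (rule W4_hubN[OF kp]) simp
  have h4: "\<forall>x. fst x + snd x = 4 \<longrightarrow> reach W4 \<kappa> x (4, 0)" by (rule W4_hubN[OF kp]) simp
  obtain t2 where t2: "\<forall>x. fst x + snd x = 2 \<longrightarrow> w4 a b l1 l2 x = t2 * (f1 (fst x) * f2 (snd x))"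
    using pf_level[OF fa h2 W4_wpos2[OF pos] W4_bal2[OF k] F] by blast
  obtain t3 where t3: "\<forall>x. fst x + snd x = 3 \<longrightarrow> w4 a b l1 l2 x = t3 * (f1 (fst x) * f2 (snd x))"
    using pf_level[OF fa h3 W4_wpos3[OF pos] W4_bal3[OF k] F] by blast
  obtain t4 where t4: "\<forall>x. fst x + snd x = 4 \<longrightarrow> w4 a b l1 l2 x = t4 * (f1 (fst x) * f2 (snd x))"
    using pf_level[OF fa h4 W4_wpos4[OF pos] W4_bal4[OF k] F] by blast
  have "w4 a b l1 l2 (3,1) * w4 a b l1 l2 (1,2) * w4 a b l1 l2 (2,0) =
        (t4 * (f1 3 * f2 1)) * (t3 * (f1 1 * f2 2)) * (t2 * (f1 2 * f2 0))"
    using t2[rule_format, of "(2,0)"] t3[rule_format, of "(1,2)"] t4[rule_format, of "(3,1)"] by simp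
  also have "\<dots> = (t4 * (f1 2 * f2 2)) * (t3 * (f1 3 * f2 0)) * (t2 * (f1 1 * f2 1))"
    by (simp add: mult_ac)
  also have "\<dots> = w4 a b l1 l2 (2,2) * w4 a b l1 l2 (3,0) * w4 a b l1 l2 (1,1)"
    using t2[rule_format, of "(1,1)"] t3[rule_format, of "(3,0)"] t4[rule_format, of "(2,2)"] by simp
  finally have eq: "w4 a b l1 l2 (3,1) * w4 a b l1 l2 (1,2) * w4 a b l1 l2 (2,0) =
     w4 a b l1 l2 (2,2) * w4 a b l1 l2 (3,0) * w4 a b l1 l2 (1,1)" .
  define Q where "Q = 497664*a^2*l2^4 + 124416*a*b^2*l2^3 + 248832*a*b*l2^4 + 497664*a*l1*l2^4 + 248832*b^2*l1*l2^3 + 497664*b*l1*l2^4"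
  have Qpos: "Q > 0" unfolding Q_def using pos by (intro add_pos_pos mult_pos_pos zero_less_power) auto
  have "(a^2 * l2 - b^2 * l1) * Q = 0"
    using eq unfolding Q_def by (simp add: w4_def) algebra
  then have "a^2 * l2 = b^2 * l1" using Qpos by simp
  then show "complex_balanced W4 \<kappa>" using W4_cb_of[OF pos(1,2) k] by blast
qed


theorem lemma4p3:
  shows "(\<forall>\<kappa>. (\<forall>r\<in>W3. \<kappa> r > 0) \<longrightarrow> (product_form W3 \<kappa> \<longleftrightarrow> complex_balanced W3 \<kappa>)) \<and>
         (\<forall>\<kappa>. (\<forall>r\<in>W4. \<kappa> r > 0) \<longrightarrow> (product_form W4 \<kappa> \<longleftrightarrow> complex_balanced W4 \<kappa>))"
  using W3_thm W4_thm by blast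

end
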